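(* Let $\mu$ be a finite non-negative Borel measure on $\mathbb T$ and $n$ a positive integer. Then for every $w\in\mathbb D$, $$D_{\mu,n}\Big(\frac{1}{1-z\overline w}\Big)=\frac{|w|^{2n}}{(1-|w|^2)^n}V_\mu(w),\qquad V_\mu(w)=\int_{\mathbb T}\frac{d\mu(\lambda)}{|1-\lambda\overline w|^2}.$$
   Context: $\mathbb D$ open unit disc, $\mathbb T$ unit circle, $dA$ normalized area measure. $P_\mu(z)=\int_{\mathbb T}\frac{1-|z|^2}{|z-\zeta|^2}d\mu(\zeta)$ and, for $f\in\mathcal O(\mathbb D)$ (here $f(z)=\frac1{1-z\overline w}$ as a function of $z$), $D_{\mu,n}(f)=\frac{1}{n!(n-1)!}\int_{\mathbb D}|f^{(n)}(z)|^2P_\mu(z)(1-|z|^2)^{n-1}dA(z)$. *)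

theory Defs
  imports "HOL-Analysis.Analysis"
begin

text \<open>Finite positive Borel measures on the unit circle are modelled as finite
  measures on the Borel sets of the complex plane that vanish outside the
  unit circle.\<close>
definition circle_measure :: "complex measure \<Rightarrow> bool" where
  "circle_measure \<mu> \<longleftrightarrow> sets \<mu> = sets borel \<and> finite_measure \<mu> \<and>
     emeasure \<mu> (UNIV - sphere 0 1) = 0"

definition poisson :: "complex measure \<Rightarrow> complex \<Rightarrow> real" where
  "poisson \<mu> z = (\<integral>\<zeta>. (1 - (cmod z)\<^sup>2) / (cmod (z - \<zeta>))\<^sup>2 \<partial>\<mu>)"

definition dA :: "complex measure" where
  "dA = density (restrict_space lborel (ball 0 1)) (\<lambda>_. ennreal (1 / pi))"

definition D_mu_n :: "complex measure \<Rightarrow> nat \<Rightarrow> (complex \<Rightarrow> complex) \<Rightarrow> ennreal" where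
  "D_mu_n \<mu> n f = ennreal (1 / (fact n * fact (n - 1))) *
     (\<integral>\<^sup>+ z. ennreal ((cmod ((deriv ^^ n) f z))\<^sup>2 * poisson \<mu> z * (1 - (cmod z)\<^sup>2) ^ (n - 1)) \<partial>dA)"

definition V_mu :: "complex measure \<Rightarrow> complex \<Rightarrow> real" where
  "V_mu \<mu> w = (\<integral>\<zeta>. 1 / (cmod (1 - \<zeta> * cnj w))\<^sup>2 \<partial>\<mu>)"

end

theory Submission
  imports Defs "HOL-Complex_Analysis.Complex_Analysis"
begin
definition R2C :: "real^2 \<Rightarrow> complex" where "R2C v = Complex (v$1) (v$2)"
definition C2R :: "complex \<Rightarrow> real^2" where "C2R z = vector [Re z, Im z]"

lemma C2R_nth [simp]: "C2R z $ 1 = Re z" "C2R z $ 2 = Im z"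
  by (simp_all add: C2R_def)

lemma R2C_C2R [simp]: "R2C (C2R z) = z" by (simp add: R2C_def complex_eq_iff)
lemma C2R_R2C [simp]: "C2R (R2C v) = v"
  by (simp add: R2C_def vec_eq_iff forall_2)

lemma bounded_linear_R2C: "bounded_linear R2C"
proof -
  have "linear R2C"
    by (auto simp: linear_iff R2C_def complex_eq_iff)
  then show ?thesis by (simp add: linear_conv_bounded_linear)
qed

lemma bounded_linear_C2R: "bounded_linear C2R"
proof -
  have "linear C2R"
    by (auto simp: linear_iff vec_eq_iff forall_2)
  then show ?thesis by (simp add: linear_conv_bounded_linear)
qed

lemma R2C_meas [measurable]: "R2C \<in> borel_measurable borel"
  using bounded_linear_R2C by (intro borel_measurable_continuous_onI linear_continuous_on)

lemma Basis_real2: "(Basis :: (real^2) set) = {axis 1 1, axis 2 1}"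
  by (auto simp: Basis_vec_def UNIV_2)

lemma axis_12_neq: "axis 1 (1::real) \<noteq> (axis 2 1 :: real^2)"
  by (simp add: axis_eq_axis)

lemma lborel_R2C: "distr lborel borel R2C = (lborel :: complex measure)"
proof (rule lborel_eqI[symmetric])
  fix l u :: complex
  assume le: "\<And>b. b \<in> Basis \<Longrightarrow> l \<bullet> b \<le> u \<bullet> b"
  have e1: "R2C -` box l u = box (C2R l) (C2R u)"
    by (auto simp: mem_box_cart mem_box Basis_complex_def forall_2 R2C_def)
  have "Re l \<le> Re u" "Im l \<le> Im u" using le[of 1] le[of \<i>] by (auto simp: Basis_complex_def)
  moreover note e1
  moreover have "emeasure lborel (box (C2R l) (C2R u)) = ennreal ((Re u - Re l) * (Im u - Im l))"
    using le \<open>Re l \<le> Re u\<close> \<open>Im l \<le> Im u\<close>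
    by (simp add: emeasure_lborel_box_eq Basis_complex_def box_ne_empty Basis_real2 axis_12_neq
         cart_eq_inner_axis[symmetric] forall_2)
  ultimately show "emeasure (distr lborel borel R2C) (box l u) = (\<Prod>b\<in>Basis. (u - l) \<bullet> b)"
    by (simp add: emeasure_distr Basis_complex_def)
qed simp

lemma abs_int_nn:
  fixes h :: "'a::euclidean_space \<Rightarrow> real"
  assumes h0: "\<And>x. 0 \<le> h x"
    and hm: "(\<lambda>x. indicator T x * h x) \<in> borel_measurable lebesgue"
  shows "h absolutely_integrable_on T \<longleftrightarrow> (\<integral>\<^sup>+x. ennreal (indicator T x * h x) \<partial>lebesgue) < \<infinity>"
    and "h absolutely_integrable_on T \<Longrightarrow> (\<integral>\<^sup>+x. ennreal (indicator T x * h x) \<partial>lebesgue) = ennreal (integral T h)"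
proof -
  have eq: "(\<lambda>x. indicator T x *\<^sub>R h x) = (\<lambda>x. indicator T x * h x)" by auto
  have nrm: "(\<lambda>x. ennreal (norm (indicator T x * h x))) = (\<lambda>x. ennreal (indicator T x * h x))"
    using h0 by (auto simp: indicator_def)
  show "h absolutely_integrable_on T \<longleftrightarrow> (\<integral>\<^sup>+x. ennreal (indicator T x * h x) \<partial>lebesgue) < \<infinity>"
    unfolding set_integrable_def eq integrable_iff_bounded nrm using hm by auto
  assume ai: "h absolutely_integrable_on T"
  have "(LINT x:T | lebesgue. h x) = integral T h"
    using set_lebesgue_integral_eq_integral(2)[OF ai] .
  moreover have "(\<integral>\<^sup>+x. ennreal (indicator T x * h x) \<partial>lebesgue) = ennreal (LINT x | lebesgue. indicator T x * h x)"
    using ai unfolding set_integrable_def eq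
    by (intro nn_integral_eq_integral) (auto simp: h0)
  ultimately show "(\<integral>\<^sup>+x. ennreal (indicator T x * h x) \<partial>lebesgue) = ennreal (integral T h)"
    by (simp add: set_lebesgue_integral_def eq)
qed

lemma cv_nn_cart:
  fixes f :: "real^'m::{finite,wellorder} \<Rightarrow> real" and g :: "real^'m::_ \<Rightarrow> real^'m::_"
  assumes S: "S \<in> sets lebesgue"
   and der: "\<And>x. x \<in> S \<Longrightarrow> (g has_derivative g' x) (at x within S)"
   and inj: "inj_on g S"
   and f0: "\<And>y. 0 \<le> f y"
   and fm: "(\<lambda>x. indicator (g`S) x * f x) \<in> borel_measurable lebesgue"
   and hm: "(\<lambda>x. indicator S x * (\<bar>det (matrix (g' x))\<bar> * f (g x))) \<in> borel_measurable lebesgue"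
  shows "(\<integral>\<^sup>+x. ennreal (indicator (g`S) x * f x) \<partial>lebesgue) =
         (\<integral>\<^sup>+x. ennreal (indicator S x * (\<bar>det (matrix (g' x))\<bar> * f (g x))) \<partial>lebesgue)"
proof -
  have key: "(\<lambda>x. \<bar>det (matrix (g' x))\<bar> * f (g x)) absolutely_integrable_on S \<and>
       integral S (\<lambda>x. \<bar>det (matrix (g' x))\<bar> * f (g x)) = b \<longleftrightarrow>
       f absolutely_integrable_on (g ` S) \<and> integral (g ` S) f = b" for b
  proof -
    have "(\<lambda>x. \<bar>det (matrix (g' x))\<bar> *\<^sub>R vec (f (g x)) :: real^1) absolutely_integrable_on S \<and>
       integral S (\<lambda>x. \<bar>det (matrix (g' x))\<bar> *\<^sub>R vec (f (g x)) :: real^1) = vec b \<longleftrightarrow>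
       (\<lambda>x. vec (f x) :: real^1) absolutely_integrable_on (g ` S) \<and> integral (g ` S) (\<lambda>x. vec (f x) :: real^1) = vec b"
      by (rule has_absolute_integral_change_of_variables[OF S der inj])
    then show ?thesis
      by (simp add: absolutely_integrable_on_1_iff integral_on_1_eq vec_eq_iff)
  qed
  have h0: "\<And>x. 0 \<le> \<bar>det (matrix (g' x))\<bar> * f (g x)" using f0 by simp
  show ?thesis
  proof (cases "f absolutely_integrable_on (g ` S)")
    case True
    then have "(\<lambda>x. \<bar>det (matrix (g' x))\<bar> * f (g x)) absolutely_integrable_on S \<and>
       integral S (\<lambda>x. \<bar>det (matrix (g' x))\<bar> * f (g x)) = integral (g ` S) f"
      using key by blast
    then show ?thesis
      using abs_int_nn(2)[OF f0 fm True] abs_int_nn(2)[OF h0 hm] by simp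
  next
    case False
    then have "\<not> (\<lambda>x. \<bar>det (matrix (g' x))\<bar> * f (g x)) absolutely_integrable_on S"
      using key by blast
    then show ?thesis
      using False abs_int_nn(1)[OF f0 fm] abs_int_nn(1)[OF h0 hm] by (simp add: less_top[symmetric])
  qed
qed

definition jac :: "(complex \<Rightarrow> complex) \<Rightarrow> real" where
  "jac A = Re (A 1) * Im (A \<i>) - Im (A 1) * Re (A \<i>)"

lemma R2C_axis [simp]: "R2C (axis 1 1) = 1" "R2C (axis 2 1) = \<i>"
  by (simp_all add: R2C_def axis_def complex_eq_iff)

lemma nn_integral_R2C:
  assumes "f \<in> borel_measurable borel"
  shows "(\<integral>\<^sup>+z. f z \<partial>lborel) = (\<integral>\<^sup>+v. f (R2C v) \<partial>lborel)"
proof -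
  have "(\<integral>\<^sup>+z. f z \<partial>lborel) = (\<integral>\<^sup>+z. f z \<partial>distr lborel borel R2C)"
    by (simp add: lborel_R2C)
  also have "\<dots> = (\<integral>\<^sup>+v. f (R2C v) \<partial>lborel)"
    using assms by (intro nn_integral_distr) auto
  finally show ?thesis .
qed

lemma cv_nn_complex:
  fixes f :: "complex \<Rightarrow> real" and g :: "complex \<Rightarrow> complex"
  assumes S: "S \<in> sets borel"
   and der: "\<And>x. x \<in> S \<Longrightarrow> (g has_derivative g' x) (at x within S)"
   and inj: "inj_on g S"
   and f0: "\<And>y. 0 \<le> f y"
   and fm: "(\<lambda>x. indicator (g`S) x * f x) \<in> borel_measurable borel"
   and hm: "(\<lambda>x. indicator S x * (\<bar>jac (g' x)\<bar> * f (g x))) \<in> borel_measurable borel"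
  shows "(\<integral>\<^sup>+x. ennreal (indicator (g`S) x * f x) \<partial>lborel) =
         (\<integral>\<^sup>+x. ennreal (indicator S x * (\<bar>jac (g' x)\<bar> * f (g x))) \<partial>lborel)"
proof -
  define S' where "S' = R2C -` S"
  define G where "G = C2R \<circ> g \<circ> R2C"
  define G' where "G' v = C2R \<circ> g' (R2C v) \<circ> R2C" for v
  have S'L: "S' \<in> sets lebesgue"
  proof -
    have "S' \<in> sets borel" unfolding S'_def using measurable_sets[OF R2C_meas S] by simp
    then show ?thesis by simp
  qed
  have imS': "R2C ` S' = S"
    unfolding S'_def by (auto simp: image_iff) (metis R2C_C2R)
  have derG: "(G has_derivative G' v) (at v within S')" if "v \<in> S'" for v
  proof -
    have d1: "(R2C has_derivative R2C) (at v within S')"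
      using bounded_linear_R2C by (rule bounded_linear_imp_has_derivative)
    have d2: "(g has_derivative g' (R2C v)) (at (R2C v) within R2C ` S')"
      using der that imS' by (auto simp: S'_def)
    have d3: "(C2R has_derivative C2R) (at (g (R2C v)) within g ` R2C ` S')"
      using bounded_linear_C2R by (rule bounded_linear_imp_has_derivative)
    have "((g \<circ> R2C) has_derivative (g' (R2C v) \<circ> R2C)) (at v within S')"
      by (rule diff_chain_within[OF d1 d2])
    then have "((C2R \<circ> (g \<circ> R2C)) has_derivative (C2R \<circ> (g' (R2C v) \<circ> R2C))) (at v within S')"
      by (rule diff_chain_within) (use d3 in \<open>simp add: image_comp\<close>)
    then show ?thesis by (simp add: G_def G'_def o_assoc)
  qed
  have injG: "inj_on G S'"
  proof (rule inj_onI)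
    fix x y assume "x \<in> S'" "y \<in> S'" "G x = G y"
    then have "R2C (C2R (g (R2C x))) = R2C (C2R (g (R2C y)))" by (simp add: G_def)
    then have "R2C x = R2C y" using inj \<open>x \<in> S'\<close> \<open>y \<in> S'\<close> by (auto simp: S'_def inj_on_def)
    then show "x = y" by (metis C2R_R2C)
  qed
  have detG: "det (matrix (G' v)) = jac (g' (R2C v))" for v
    by (simp add: det_2 matrix_def G'_def jac_def)
  have indG: "indicator (G ` S') v = (indicator (g ` S) (R2C v) :: real)" for v
  proof -
    have "v \<in> G ` S' \<longleftrightarrow> R2C v \<in> g ` S"
      unfolding G_def S'_def
    proof
      assume "R2C v \<in> g ` S"
      then obtain x where "x \<in> S" "R2C v = g x" by auto
      then show "v \<in> (C2R \<circ> g \<circ> R2C) ` (R2C -` S)"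
        by (auto simp: image_iff intro!: bexI[of _ "C2R x"]) (metis C2R_R2C)
    qed (auto simp: image_iff)
    then show ?thesis by (simp add: indicator_def)
  qed
  have indS: "indicator S' v = (indicator S (R2C v) :: real)" for v
    by (simp add: S'_def indicator_def)
  have GR: "R2C (G v) = g (R2C v)" for v by (simp add: G_def)
  have m1: "(\<lambda>x. indicator (G ` S') x * (f \<circ> R2C) x) \<in> borel_measurable lebesgue"
  proof -
    have "(\<lambda>v. indicator (g ` S) (R2C v) * f (R2C v)) \<in> borel_measurable borel"
      using measurable_compose[OF R2C_meas fm] by (simp add: o_def)
    then show ?thesis using measurable_completion[of _ lborel] by (simp add: indG)
  qed
  have m2: "(\<lambda>x. indicator S' x * (\<bar>det (matrix (G' x))\<bar> * (f \<circ> R2C) (G x))) \<in> borel_measurable lebesgue"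
  proof -
    have "(\<lambda>v. indicator S (R2C v) * (\<bar>jac (g' (R2C v))\<bar> * f (g (R2C v)))) \<in> borel_measurable borel"
      using measurable_compose[OF R2C_meas hm] by (simp add: o_def)
    then show ?thesis using measurable_completion[of _ lborel] by (simp add: indS detG GR)
  qed
  have f0': "\<And>y. 0 \<le> (f \<circ> R2C) y" using f0 by simp
  note cv = cv_nn_cart[OF S'L derG injG f0' m1 m2]
  then have "(\<integral>\<^sup>+v. ennreal (indicator (g`S) (R2C v) * f (R2C v)) \<partial>lborel) =
        (\<integral>\<^sup>+v. ennreal (indicator S (R2C v) * (\<bar>jac (g' (R2C v))\<bar> * f (g (R2C v)))) \<partial>lborel)"
    using cv by (simp add: indG indS detG GR nn_integral_completion)
  then show ?thesis
    using fm hm by (subst (1 2) nn_integral_R2C) auto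
qed

lemma jac_mult: "jac ((*) c) = (cmod c)^2"
  unfolding jac_def cmod_power2 by (simp add: power2_eq_square)

lemma Complex_pair_borel: "(\<lambda>p. Complex (fst p) (snd p)) \<in> borel_measurable borel"
proof -
  have "continuous_on UNIV (\<lambda>p::real\<times>real. Complex (fst p) (snd p))"
    unfolding Complex_eq by (intro continuous_intros)
  then show ?thesis by (rule borel_measurable_continuous_onI)
qed

lemma Complex_pair_meas [measurable]: "(\<lambda>p. Complex (fst p) (snd p)) \<in> borel_measurable (lborel \<Otimes>\<^sub>M lborel)"
  using Complex_pair_borel by (simp add: lborel_prod)

lemma lborel_complex_prod: "distr (lborel \<Otimes>\<^sub>M lborel) borel (\<lambda>p. Complex (fst p) (snd p)) = (lborel :: complex measure)"
proof (rule lborel_eqI[symmetric])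
  fix l u :: complex
  assume le: "\<And>b. b \<in> Basis \<Longrightarrow> l \<bullet> b \<le> u \<bullet> b"
  have "Re l \<le> Re u" "Im l \<le> Im u" using le[of 1] le[of \<i>] by (auto simp: Basis_complex_def)
  have e1: "(\<lambda>p. Complex (fst p) (snd p)) -` box l u \<inter> space (lborel \<Otimes>\<^sub>M lborel) = {Re l<..<Re u} \<times> {Im l<..<Im u}"
    by (auto simp: mem_box Basis_complex_def space_pair_measure)
  have "emeasure (lborel \<Otimes>\<^sub>M lborel) ({Re l<..<Re u} \<times> {Im l<..<Im u}) = ennreal ((Re u - Re l) * (Im u - Im l))"
    using \<open>Re l \<le> Re u\<close> \<open>Im l \<le> Im u\<close>
    by (simp add: lborel.emeasure_pair_measure_Times ennreal_mult)
  then show "emeasure (distr (lborel \<Otimes>\<^sub>M lborel) borel (\<lambda>p. Complex (fst p) (snd p))) (box l u) = (\<Prod>b\<in>Basis. (u - l) \<bullet> b)"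
    by (simp add: emeasure_distr e1 Basis_complex_def)
qed simp

lemma nn_integral_complex_iter:
  assumes [measurable]: "f \<in> borel_measurable borel"
  shows "(\<integral>\<^sup>+z. f z \<partial>lborel) = (\<integral>\<^sup>+x. \<integral>\<^sup>+y. f (Complex x y) \<partial>lborel \<partial>lborel)"
proof -
  have "(\<integral>\<^sup>+z. f z \<partial>lborel) = (\<integral>\<^sup>+z. f z \<partial>distr (lborel \<Otimes>\<^sub>M lborel) borel (\<lambda>p. Complex (fst p) (snd p)))"
    by (simp add: lborel_complex_prod)
  also have "\<dots> = (\<integral>\<^sup>+p. f (Complex (fst p) (snd p)) \<partial>(lborel \<Otimes>\<^sub>M lborel))"
    by (intro nn_integral_distr) auto
  also have "\<dots> = (\<integral>\<^sup>+x. \<integral>\<^sup>+y. f (Complex x y) \<partial>lborel \<partial>lborel)"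
    by (subst lborel.nn_integral_fst[symmetric]) auto
  finally show ?thesis .
qed

definition pol :: "complex \<Rightarrow> complex" where
  "pol z = of_real (Re z * cos (Im z)) + \<i> * of_real (Re z * sin (Im z))"

definition pol' :: "complex \<Rightarrow> complex \<Rightarrow> complex" where
  "pol' z h = of_real (Re h * cos (Im z) - Re z * sin (Im z) * Im h) + \<i> * of_real (Re h * sin (Im z) + Re z * cos (Im z) * Im h)"

lemma pol_has_derivative: "(pol has_derivative pol' z) (at z within S)"
proof -
  have "((\<lambda>z. of_real (Re z * cos (Im z)) + \<i> * of_real (Re z * sin (Im z))) has_derivative
   (\<lambda>h. of_real (Re h * cos (Im z) - Re z * sin (Im z) * Im h) + \<i> * of_real (Re h * sin (Im z) + Re z * cos (Im z) * Im h))) (at z within S)"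
    by (auto intro!: derivative_eq_intros bounded_linear.has_derivative[OF bounded_linear_Re] bounded_linear.has_derivative[OF bounded_linear_Im] simp: algebra_simps)
  then show ?thesis unfolding pol_def[abs_def] pol'_def[abs_def] .
qed

lemma jac_pol': "jac (pol' z) = Re z"
proof -
  have "Re z * (sin (Im z))^2 + Re z * (cos (Im z))^2 = Re z"
    by (metis distrib_left mult.right_neutral sin_cos_squared_add)
  then show ?thesis by (simp add: jac_def pol'_def power2_eq_square algebra_simps)
qed

lemma pol_exp: "pol z = of_real (Re z) * exp (\<i> * of_real (Im z))"
  by (simp add: pol_def complex_eq_iff Re_exp Im_exp)

lemma pol_Complex: "pol (Complex x y) = of_real (x * cos y) + \<i> * of_real (x * sin y)"
  by (simp add: pol_def)

lemma pol_cont: "continuous_on UNIV pol"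
  unfolding pol_def by (intro continuous_intros)

lemma pol_meas [measurable]: "pol \<in> borel_measurable borel"
  by (rule borel_measurable_continuous_onI[OF pol_cont])

lemma null_real_axis: "{z::complex. Im z = 0} \<in> null_sets lborel"
proof -
  have m: "{z::complex. Im z = 0} \<in> sets borel" by measurable
  have "emeasure lborel {z::complex. Im z = 0} = (\<integral>\<^sup>+z. indicator {z::complex. Im z = 0} z \<partial>lborel)"
    using m by simp
  also have "\<dots> = (\<integral>\<^sup>+x. \<integral>\<^sup>+y. indicator {z::complex. Im z = 0} (Complex x y) \<partial>lborel \<partial>lborel)"
    using m by (intro nn_integral_complex_iter) simp
  also have "\<dots> = (\<integral>\<^sup>+x. \<integral>\<^sup>+y. indicator {0::real} y \<partial>lborel \<partial>(lborel::real measure))"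
  proof -
    have "\<And>x y::real. indicator {z::complex. Im z = 0} (Complex x y) = (indicator {0::real} y :: ennreal)"
      by (simp add: indicator_def)
    then show ?thesis by simp
  qed
  also have "\<dots> = 0" by simp
  finally show ?thesis using m by (simp add: null_sets_def)
qed

definition polS :: "complex set" where
  "polS = {z. 0 < Re z \<and> Re z < 1 \<and> 0 < Im z \<and> Im z < 2*pi}"

lemma polS_borel: "polS \<in> sets borel"
  unfolding polS_def by measurable

lemma cmod_pol: "0 \<le> Re z \<Longrightarrow> cmod (pol z) = Re z"
  by (simp add: pol_exp norm_mult)

lemma Arg2pi_pol: "z \<in> polS \<Longrightarrow> Arg2pi (pol z) = Im z"
  unfolding pol_exp polS_def by (rule Arg2pi_unique) auto

lemma pol_image: "pol ` polS = ball 0 1 - {z. Im z = 0 \<and> 0 \<le> Re z}"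
proof safe
  fix z assume z: "z \<in> polS"
  then show "pol z \<in> ball 0 1" by (simp add: cmod_pol polS_def)
  assume "Im (pol z) = 0" "0 \<le> Re (pol z)"
  then have "Arg2pi (pol z) = 0"
    by (simp add: Arg2pi_eq_0 complex_is_Real_iff)
  then show False using Arg2pi_pol[OF z] z by (simp add: polS_def)
next
  have claim: "z \<in> pol ` polS" if z: "z \<in> ball 0 1" and nz: "\<not> (Im z = 0 \<and> 0 \<le> Re z)" for z
  proof -
    have "z \<noteq> 0" using nz by auto
    have "Arg2pi z \<noteq> 0" using nz by (simp add: Arg2pi_eq_0 complex_is_Real_iff)
    then have a: "0 < Arg2pi z" "Arg2pi z < 2*pi" using Arg2pi[of z] by auto
    have "Complex (cmod z) (Arg2pi z) \<in> polS"
      using a z \<open>z \<noteq> 0\<close> by (simp add: polS_def)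
    moreover have "pol (Complex (cmod z) (Arg2pi z)) = z"
      using Arg2pi_eq[of z] by (simp add: pol_exp)
    ultimately show ?thesis by (metis image_eqI)
  qed
  fix z :: complex assume "z \<in> ball 0 1" "z \<notin> pol ` polS"
  then show "Im z = 0" "0 \<le> Re z" using claim by blast+
qed

lemma pol_inj: "inj_on pol polS"
proof (rule inj_onI)
  fix z1 z2 assume z: "z1 \<in> polS" "z2 \<in> polS" "pol z1 = pol z2"
  have "Re z1 = Re z2" using z cmod_pol[of z1] cmod_pol[of z2] by (simp add: polS_def)
  moreover have "Im z1 = Im z2" using z Arg2pi_pol[of z1] Arg2pi_pol[of z2] by simp
  ultimately show "z1 = z2" by (simp add: complex_eq_iff)
qed

lemma polar_nn:
  fixes G :: "complex \<Rightarrow> real"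
  assumes G0: "\<And>z. 0 \<le> G z" and Gm[measurable]: "G \<in> borel_measurable borel"
  shows "(\<integral>\<^sup>+z. ennreal (indicator (ball 0 1) z * G z) \<partial>lborel) =
         (\<integral>\<^sup>+x. \<integral>\<^sup>+y. ennreal (indicator {0<..<1} x * indicator {0<..<2*pi} y * (x * G (pol (Complex x y)))) \<partial>lborel \<partial>lborel)"
proof -
  have AE: "AE z in lborel. ennreal (indicator (ball 0 1) z * G z) = ennreal (indicator (pol ` polS) z * G z)"
  proof (rule AE_I'[OF null_real_axis])
    show "{z \<in> space lborel. \<not> ennreal (indicator (ball 0 1) z * G z) = ennreal (indicator (pol ` polS) z * G z)}
          \<subseteq> {z. Im z = 0}"
      by (auto simp: pol_image indicator_def)
  qed
  have c1: "{z::complex. Im z = 0 \<and> 0 \<le> Re z} \<in> sets borel"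
    by (intro borel_closed closed_Collect_conj closed_Collect_eq closed_Collect_le continuous_intros)
  have "pol ` polS \<in> sets borel"
    unfolding pol_image using c1 by auto
  then have fm: "(\<lambda>x. indicator (pol ` polS) x * G x) \<in> borel_measurable borel"
    using Gm by (intro borel_measurable_times borel_measurable_indicator) auto
  have hm: "(\<lambda>x. indicator polS x * (\<bar>jac (pol' x)\<bar> * G (pol x))) \<in> borel_measurable borel"
    using polS_borel by (simp add: jac_pol') measurable
  have "(\<integral>\<^sup>+z. ennreal (indicator (ball 0 1) z * G z) \<partial>lborel) =
        (\<integral>\<^sup>+z. ennreal (indicator (pol ` polS) z * G z) \<partial>lborel)"
    by (rule nn_integral_cong_AE[OF AE])
  also have "\<dots> = (\<integral>\<^sup>+z. ennreal (indicator polS z * (\<bar>jac (pol' z)\<bar> * G (pol z))) \<partial>lborel)"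
    by (rule cv_nn_complex[OF polS_borel pol_has_derivative pol_inj G0 fm hm])
  also have "\<dots> = (\<integral>\<^sup>+x. \<integral>\<^sup>+y. ennreal (indicator polS (Complex x y) * (\<bar>jac (pol' (Complex x y))\<bar> * G (pol (Complex x y)))) \<partial>lborel \<partial>lborel)"
    using measurable_compose[OF hm measurable_ennreal] by (intro nn_integral_complex_iter) (simp add: o_def)
  also have "\<dots> = (\<integral>\<^sup>+x. \<integral>\<^sup>+y. ennreal (indicator {0<..<1} x * indicator {0<..<2*pi} y * (x * G (pol (Complex x y)))) \<partial>lborel \<partial>lborel)"
    by (intro nn_integral_cong) (auto simp: jac_pol' indicator_def polS_def)
  finally show ?thesis .
qed

lemma pol_cis: "pol (Complex x y) = of_real x * cis y"
  by (simp add: pol_def complex_eq_iff)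

lemma re_herglotz:
  assumes "cmod \<eta> = 1"
  shows "Re ((\<eta> + u) / (\<eta> - u)) = (1 - (cmod u)^2) / (cmod (u - \<eta>))^2"
proof -
  have e: "(Re \<eta>)^2 + (Im \<eta>)^2 = 1" using assms by (simp add: cmod_power2[symmetric])
  have "(Re \<eta> + Re u) * (Re \<eta> - Re u) + (Im \<eta> + Im u) * (Im \<eta> - Im u) = 1 - ((Re u)^2 + (Im u)^2)"
    using e by (simp add: algebra_simps power2_eq_square)
  moreover have "(cmod (u - \<eta>))^2 = (Re \<eta> - Re u)^2 + (Im \<eta> - Im u)^2"
    unfolding cmod_power2 by (simp add: power2_eq_square algebra_simps)
  ultimately show ?thesis
    by (simp add: Re_divide cmod_power2)
qed

lemma poisson_circle_has_integral:
  assumes x: "0 < x" "x < 1" and eta: "cmod \<eta> = 1"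
  shows "((\<lambda>y. (1 - x^2) / (cmod (pol (Complex x y) - \<eta>))^2) has_integral (2*pi)) {0<..<2*pi}"
proof -
  define h where "h u = (\<eta> + u) / (\<eta> - u)" for u
  have nz: "\<eta> - u \<noteq> 0" if "u \<in> cball 0 x" for u
  proof
    assume "\<eta> - u = 0"
    then have "cmod u = 1" using eta by simp
    then show False using that x by simp
  qed
  have "continuous_on (cball 0 x) h"
    unfolding h_def using nz by (intro continuous_intros) auto
  moreover have "h holomorphic_on ball 0 x"
    unfolding h_def using nz by (intro holomorphic_intros) auto
  ultimately have "((\<lambda>u. h u / (u - 0)) has_contour_integral (2 * of_real pi * \<i> * h 0)) (circlepath 0 x)"
    using x by (intro Cauchy_integral_circlepath) auto
  then have "((\<lambda>t. h (0 + x * cis t) / (0 + x * cis t - 0) * x * \<i> * cis t) has_integral (2 * of_real pi * \<i> * h 0)) {0..2*pi}"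
    unfolding circlepath_def by (subst (asm) has_contour_integral_part_circlepath_iff) auto
  moreover have "h 0 = 1" using eta by (auto simp: h_def)
  moreover have "h (0 + x * cis t) / (0 + x * cis t - 0) * x * \<i> * cis t = \<i> * h (x * cis t)" for t
    using x by (simp add: field_simps)
  ultimately have "((\<lambda>t. \<i> * h (x * cis t)) has_integral (\<i> * (2 * of_real pi))) {0..2*pi}"
    by (simp add: mult.commute mult.left_commute)
  then have "((\<lambda>t. h (x * cis t)) has_integral (2 * of_real pi)) {0..2*pi}"
    by (subst (asm) has_integral_mult_right_iff) auto
  then have "((Re \<circ> (\<lambda>t. h (x * cis t))) has_integral Re (2 * of_real pi)) {0..2*pi}"
    by (rule has_integral_linear[OF _ bounded_linear_Re])
  then have "((\<lambda>t. Re (h (x * cis t))) has_integral 2 * pi) {0..2*pi}"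
    by (simp add: o_def)
  moreover have "Re (h (x * cis t)) = (1 - x^2) / (cmod (pol (Complex x t) - \<eta>))^2" for t
    unfolding h_def re_herglotz[OF eta] pol_cis using x by (simp add: norm_mult)
  ultimately have "((\<lambda>y. (1 - x^2) / (cmod (pol (Complex x y) - \<eta>))^2) has_integral (2*pi)) {0..2*pi}"
    by simp
  then show ?thesis
    by (metis box_real(1) cbox_interval has_integral_open_interval)
qed

lemma poisson_circle_nn:
  assumes x: "0 < x" "x < 1" and eta: "cmod \<eta> = 1"
  shows "(\<integral>\<^sup>+y. ennreal (indicator {0<..<2*pi} y * ((1 - x^2) / (cmod (pol (Complex x y) - \<eta>))^2)) \<partial>lborel) = ennreal (2*pi)"
proof -
  have "(\<integral>\<^sup>+y. ennreal (indicator {0<..<2*pi} y * ((1 - x^2) / (cmod (pol (Complex x y) - \<eta>))^2)) \<partial>lborel) =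
        ennreal (2*pi)"
    using x by (intro nn_integral_has_integral_lebesgue poisson_circle_has_integral[OF x eta])
       (auto simp: power_le_one)
  then show ?thesis .
qed

lemma radial_has_integral:
  assumes "n \<ge> 1"
  shows "((\<lambda>x::real. 2 * pi * (x * (1 - x^2)^(n-1))) has_integral (pi / n)) {0<..<1}"
proof -
  define F where "F x = - pi * (1 - x^2)^n / n" for x :: real
  have "((\<lambda>x::real. 2 * pi * (x * (1 - x^2)^(n-1))) has_integral (F 1 - F 0)) {0..1}"
  proof (rule fundamental_theorem_of_calculus)
    show "(F has_vector_derivative 2 * pi * (x * (1 - x^2)^(n-1))) (at x within {0..1})" for x
      unfolding F_def has_real_derivative_iff_has_vector_derivative[symmetric]
      using assms by (auto intro!: derivative_eq_intros simp: field_simps)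
  qed simp
  moreover have "F 1 - F 0 = pi / n" using assms by (simp add: F_def)
  ultimately show ?thesis
    by (metis box_real(1) cbox_interval has_integral_open_interval)
qed

lemma radial_nn:
  assumes "n \<ge> 1"
  shows "(\<integral>\<^sup>+x. ennreal (indicator {0<..<1} x * (2 * pi * (x * (1 - x^2)^(n-1)))) \<partial>lborel) = ennreal (pi / n)"
proof (rule nn_integral_has_integral_lebesgue[OF _ radial_has_integral[OF assms]])
  fix x :: real assume "x \<in> {0<..<1}"
  then have "0 \<le> (1 - x^2)^(n-1)" "0 \<le> x" by (auto simp: power_le_one)
  then show "0 \<le> 2 * pi * (x * (1 - x^2)^(n-1))" by simp
qed

lemma disc_poisson:
  assumes eta: "cmod \<eta> = 1" and n: "n \<ge> 1"
  shows "(\<integral>\<^sup>+u. ennreal (indicator (ball 0 1) u * ((1 - (cmod u)^2)^n / (cmod (u - \<eta>))^2)) \<partial>lborel) = ennreal (pi / n)"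
proof -
  define G where "G u = indicator (ball 0 1) u * ((1 - (cmod u)^2)^n / (cmod (u - \<eta>))^2)" for u
  have G0: "0 \<le> G u" for u
    by (auto simp: G_def indicator_def power_le_one)
  have Gm: "G \<in> borel_measurable borel" unfolding G_def
    by (intro borel_measurable_times borel_measurable_indicator borel_measurable_divide
        borel_measurable_continuous_onI continuous_intros) auto
  have "(\<integral>\<^sup>+u. ennreal (indicator (ball 0 1) u * ((1 - (cmod u)^2)^n / (cmod (u - \<eta>))^2)) \<partial>lborel)
      = (\<integral>\<^sup>+u. ennreal (indicator (ball 0 1) u * G u) \<partial>lborel)"
    by (intro nn_integral_cong) (auto simp: G_def indicator_def)
  also have "\<dots> = (\<integral>\<^sup>+x. \<integral>\<^sup>+y. ennreal (indicator {0<..<1} x * indicator {0<..<2*pi} y * (x * G (pol (Complex x y)))) \<partial>lborel \<partial>lborel)"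
    by (rule polar_nn[OF G0 Gm])
  also have "\<dots> = (\<integral>\<^sup>+x. ennreal (indicator {0<..<1} x * (2 * pi * (x * (1 - x^2)^(n-1)))) \<partial>lborel)"
  proof (intro nn_integral_cong)
    fix x :: real
    show "(\<integral>\<^sup>+y. ennreal (indicator {0<..<1} x * indicator {0<..<2*pi} y * (x * G (pol (Complex x y)))) \<partial>lborel) =
          ennreal (indicator {0<..<1} x * (2 * pi * (x * (1 - x^2)^(n-1))))"
    proof (cases "0 < x \<and> x < 1")
      case False
      then show ?thesis by (auto simp: indicator_def)
    next
      case True
      then have x: "0 < x" "x < 1" by auto
      have cp: "cmod (pol (Complex x y)) = x" for y using x by (simp add: pol_cis norm_mult)
      have c0: "0 \<le> x * (1 - x^2)^(n-1)" using x by (simp add: power_le_one)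
      have eq: "ennreal (indicator {0<..<1} x * indicator {0<..<2*pi} y * (x * G (pol (Complex x y)))) =
            ennreal (x * (1 - x^2)^(n-1)) * ennreal (indicator {0<..<2*pi} y * ((1 - x^2) / (cmod (pol (Complex x y) - \<eta>))^2))" for y
      proof -
        obtain m where m: "n = Suc m" using n by (cases n) auto
        have "indicator {0<..<1} x * indicator {0<..<2*pi} y * (x * G (pol (Complex x y))) =
              (x * (1 - x^2)^(n-1)) * (indicator {0<..<2*pi} y * ((1 - x^2) / (cmod (pol (Complex x y) - \<eta>))^2))"
          using x by (simp add: G_def cp indicator_def m)
        then show ?thesis
          using c0 x by (simp add: ennreal_mult[symmetric] power_le_one)
      qed
      have "(\<integral>\<^sup>+y. ennreal (indicator {0<..<1} x * indicator {0<..<2*pi} y * (x * G (pol (Complex x y)))) \<partial>lborel) =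
            ennreal (x * (1 - x^2)^(n-1)) * (\<integral>\<^sup>+y. ennreal (indicator {0<..<2*pi} y * ((1 - x^2) / (cmod (pol (Complex x y) - \<eta>))^2)) \<partial>lborel)"
        unfolding eq by (intro nn_integral_cmult) (simp add: pol_Complex)
      also have "\<dots> = ennreal (x * (1 - x^2)^(n-1)) * ennreal (2 * pi)"
        using poisson_circle_nn[OF x eta] by (simp only:)
      also have "\<dots> = ennreal (indicator {0<..<1} x * (2 * pi * (x * (1 - x^2)^(n-1))))"
        using x c0 by (simp add: ennreal_mult[symmetric] indicator_def mult_ac)
      finally show ?thesis .
    qed
  qed
  also have "\<dots> = ennreal (pi / n)" by (rule radial_nn[OF n])
  finally show ?thesis .
qed

lemma alg0:
  fixes W B c d P Q V :: real
  assumes "W > 0" "B > 0" "c > 0" "d > 0" "P > 0" "Q > 0"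
  shows "(W^2/B^4) * ((P*V/(Q*Q)) / ((P*P*W^2/(Q*Q*B^2)) * (c*d/B)^2)) = V/(P * c^2 * d^2)"
  using assms by (simp add: field_simps power2_eq_square power4_eq_xxxx)

lemma alg:
  fixes W B c d U :: real
  assumes "W > 0" "B > 0" "c > 0" "d > 0"
  shows "(W^2/B^4) * ((W*U/B^2)^n / ((W/B)^(2*n+2) * (c*d/B)^2)) = U^n/(W^n * c^2 * d^2)"
proof -
  have "(W/B)^(2*n+2) = W^n * W^n * W^2 / (B^n * B^n * B^2)"
  proof -
    have "(W/B)^(2*n+2) = W^(n+n+2) / B^(n+n+2)" by (simp add: power_divide mult_2)
    also have "\<dots> = W^n * W^n * W^2 / (B^n * B^n * B^2)" by (simp only: power_add)
    finally show ?thesis .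
  qed
  moreover have "(W*U/B^2)^n = W^n * U^n / (B^n * B^n)"
    by (simp add: power_divide power_mult_distrib power_mult[symmetric] mult_2[symmetric] mult.commute power_add[symmetric])
  ultimately show ?thesis using assms alg0[of W B c d "W^n" "B^n" "U^n"]
    by simp
qed

lemma I3:
  fixes w u :: complex
  shows "(cmod (1 - cnj w * u))^2 - (cmod (w - u))^2 = (1 - (cmod w)^2) * (1 - (cmod u)^2)"
  unfolding cmod_power2 by (simp add: power2_eq_square algebra_simps)

lemma cnj_mult_self: "cnj w * w = of_real ((cmod w)^2)"
  by (subst mult.commute) (simp add: complex_mult_cnj cmod_power2)

lemma one_minus_cnj_ne: "cmod w < 1 \<Longrightarrow> cmod u \<le> 1 \<Longrightarrow> 1 - cnj w * u \<noteq> 0"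
proof
  assume "cmod w < 1" "cmod u \<le> 1" "1 - cnj w * u = 0"
  then have "cmod (cnj w * u) = 1" by (metis eq_iff_diff_eq_0 norm_one)
  moreover have "cmod (cnj w * u) < 1"
  proof -
    have "cmod w * cmod u \<le> cmod w * 1"
      using \<open>cmod u \<le> 1\<close> by (intro mult_left_mono) auto
    then show ?thesis using \<open>cmod w < 1\<close> by (simp add: norm_mult)
  qed
  ultimately show False by simp
qed

definition mob :: "complex \<Rightarrow> complex \<Rightarrow> complex" where
  "mob w u = (w - u) / (1 - cnj w * u)"

lemma mob_norm:
  assumes "cmod w < 1" "cmod u \<le> 1"
  shows "1 - (cmod (mob w u))^2 = (1 - (cmod w)^2) * (1 - (cmod u)^2) / (cmod (1 - cnj w * u))^2"
proof -
  have nz: "cmod (1 - cnj w * u) \<noteq> 0" using one_minus_cnj_ne[OF assms] by simp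
  show ?thesis
    using I3[of w u] nz by (simp add: mob_def norm_divide power_divide field_simps)
qed

lemma mob_ball: "cmod w < 1 \<Longrightarrow> cmod u < 1 \<Longrightarrow> cmod (mob w u) < 1"
proof -
  assume a: "cmod w < 1" "cmod u < 1"
  have "0 < (1 - (cmod w)^2) * (1 - (cmod u)^2) / (cmod (1 - cnj w * u))^2"
    using a one_minus_cnj_ne[of w u] by (intro divide_pos_pos mult_pos_pos) (auto simp: power_less_one_iff abs_square_less_1)
  then have "(cmod (mob w u))^2 < 1" using mob_norm[of w u] a by simp
  then show ?thesis by (simp add: power_less_one_iff abs_square_less_1)
qed

lemma mob_mob: "cmod w < 1 \<Longrightarrow> cmod u \<le> 1 \<Longrightarrow> mob w (mob w u) = u"
proof -
  assume a: "cmod w < 1" "cmod u \<le> 1"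
  have nz: "1 - cnj w * u \<noteq> 0" using one_minus_cnj_ne[OF a] .
  have nz2: "1 - cnj w * w \<noteq> 0" using one_minus_cnj_ne[of w w] a by simp
  have "1 - cnj w * ((w - u) / (1 - cnj w * u)) = (1 - cnj w * w) / (1 - cnj w * u)"
    using nz by (simp add: field_simps)
  moreover have "w - (w - u) / (1 - cnj w * u) = u * (1 - cnj w * w) / (1 - cnj w * u)"
    using nz by (simp add: field_simps)
  ultimately show ?thesis using nz nz2 by (simp add: mob_def)
qed

lemma mob_image: "cmod w < 1 \<Longrightarrow> mob w ` ball 0 1 = ball 0 1"
proof safe
  fix u :: complex assume "cmod w < 1" "u \<in> ball 0 1"
  then show "mob w u \<in> ball 0 1" using mob_ball by simp
next
  fix z :: complex assume a: "cmod w < 1" "z \<in> ball 0 1"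
  then have "mob w z \<in> ball 0 1" "mob w (mob w z) = z" using mob_ball mob_mob by auto
  then show "z \<in> mob w ` ball 0 1" by (metis image_eqI)
qed

lemma mob_inj: "cmod w < 1 \<Longrightarrow> inj_on (mob w) (ball 0 1)"
  by (rule inj_on_inverseI[of _ "mob w"]) (auto simp: mob_mob)

lemma mob_deriv:
  assumes "cmod w < 1" "cmod u < 1"
  shows "(mob w has_field_derivative ((cnj w * w - 1) / (1 - cnj w * u)^2)) (at u)"
proof -
  have nz: "1 - cnj w * u \<noteq> 0" using one_minus_cnj_ne[of w u] assms by simp
  show ?thesis
    unfolding mob_def[abs_def] using nz
    by (auto intro!: derivative_eq_intros simp: field_simps power2_eq_square)
qed

lemma mob_one_minus: "cmod w < 1 \<Longrightarrow> cmod u \<le> 1 \<Longrightarrow> 1 - mob w u * cnj w = (1 - cnj w * w) / (1 - cnj w * u)"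
  using one_minus_cnj_ne[of w u] by (simp add: mob_def field_simps)

lemma mob_minus_zeta:
  assumes "cmod w < 1" "cmod u \<le> 1" "cmod \<zeta> = 1"
  shows "mob w u - \<zeta> = - (1 - \<zeta> * cnj w) * (u - (w - \<zeta>) / (1 - \<zeta> * cnj w)) / (1 - cnj w * u)"
proof -
  have nz: "1 - cnj w * u \<noteq> 0" using one_minus_cnj_ne[of w u] assms by simp
  have nz2: "1 - \<zeta> * cnj w \<noteq> 0" using one_minus_cnj_ne[of w \<zeta>] assms by (simp add: mult.commute)
  have "- (1 - \<zeta> * cnj w) * (u - (w - \<zeta>) / (1 - \<zeta> * cnj w)) = w - u - \<zeta> + \<zeta> * cnj w * u"
    using nz2 by (simp add: field_simps)
  moreover have "mob w u - \<zeta> = (w - u - \<zeta> + \<zeta> * cnj w * u) / (1 - cnj w * u)"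
    using nz by (simp add: mob_def field_simps)
  ultimately show ?thesis by simp
qed

lemma eta_norm:
  assumes "cmod w < 1" "cmod \<zeta> = 1"
  shows "cmod ((w - \<zeta>) / (1 - \<zeta> * cnj w)) = 1"
proof -
  have nz2: "1 - \<zeta> * cnj w \<noteq> 0" using one_minus_cnj_ne[of w \<zeta>] assms by (simp add: mult.commute)
  have "(cmod (1 - cnj w * \<zeta>))^2 = (cmod (w - \<zeta>))^2" using I3[of w \<zeta>] assms by simp
  then have "cmod (1 - cnj w * \<zeta>) = cmod (w - \<zeta>)" by (simp add: power2_eq_iff_nonneg)
  moreover have "w \<noteq> \<zeta>" using assms by auto
  ultimately show ?thesis using nz2 by (simp add: norm_divide mult.commute)
qed

lemma core:
  assumes z1: "cmod \<zeta> = 1" and w1: "cmod w < 1" and n: "n \<ge> 1"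
  shows "(\<integral>\<^sup>+z. ennreal (indicator (ball 0 1) z * ((1 - (cmod z)^2)^n / ((cmod (1 - z * cnj w))^(2*n+2) * (cmod (z - \<zeta>))^2))) \<partial>lborel)
       = ennreal (pi / (n * (1 - (cmod w)^2)^n * (cmod (1 - \<zeta> * cnj w))^2))"
proof -
  define F where "F z = indicator (ball 0 1) z * ((1 - (cmod z)^2)^n / ((cmod (1 - z * cnj w))^(2*n+2) * (cmod (z - \<zeta>))^2))" for z
  define D where "D u = (cnj w * w - 1) / (1 - cnj w * u)^2" for u
  define \<eta> where "\<eta> = (w - \<zeta>) / (1 - \<zeta> * cnj w)"
  define W where "W = 1 - (cmod w)^2"
  define c where "c = cmod (1 - \<zeta> * cnj w)"
  have eta1: "cmod \<eta> = 1" unfolding \<eta>_def by (rule eta_norm[OF w1 z1])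
  have W0: "W > 0" using w1 by (simp add: W_def power_less_one_iff abs_square_less_1)
  have c0: "c > 0" using one_minus_cnj_ne[of w \<zeta>] w1 z1 by (simp add: c_def mult.commute)
  have F0: "0 \<le> F z" for z
    by (auto simp: F_def indicator_def power_le_one)
  have Fm: "F \<in> borel_measurable borel" unfolding F_def
    by (intro borel_measurable_times borel_measurable_indicator borel_measurable_divide
        borel_measurable_continuous_onI continuous_intros) auto
  have key: "indicator (ball 0 1) u * (\<bar>jac ((*) (D u))\<bar> * F (mob w u)) =
        indicator (ball 0 1) u * ((1 - (cmod u)^2)^n / (cmod (u - \<eta>))^2) / (W^n * c^2)" for u
  proof (cases "u \<in> ball 0 1")
    case False then show ?thesis by simp
  next
    case True
    then have u1: "cmod u < 1" by simp
    define B where "B = cmod (1 - cnj w * u)"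
    define d where "d = cmod (u - \<eta>)"
    have B0: "B > 0" using one_minus_cnj_ne[of w u] w1 u1 by (simp add: B_def)
    have d0: "d > 0" using eta1 u1 by (auto simp: d_def)
    have cw: "cmod (cnj w * w - 1) = W"
    proof -
      have "cnj w * w - 1 = - of_real W" by (simp add: cnj_mult_self W_def)
      then show ?thesis using W0 by simp
    qed
    have jac: "\<bar>jac ((*) (D u))\<bar> = W^2 / B^4"
      by (simp add: jac_mult D_def norm_divide norm_power cw B_def power_divide power_mult[symmetric])
    have m1: "cmod (mob w u) < 1" using mob_ball[OF w1 u1] .
    have e1: "1 - (cmod (mob w u))^2 = W * (1 - (cmod u)^2) / B^2"
      using mob_norm[OF w1] u1 by (simp add: W_def B_def)
    have e2: "cmod (1 - mob w u * cnj w) = W / B"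
      using mob_one_minus[OF w1] u1 cw by (simp add: norm_divide B_def norm_minus_commute)
    have e3: "cmod (mob w u - \<zeta>) = c * d / B"
      using mob_minus_zeta[OF w1 _ z1, of u] u1
      by (simp add: norm_divide norm_mult c_def d_def B_def \<eta>_def norm_minus_commute)
    have "\<bar>jac ((*) (D u))\<bar> * F (mob w u) = (W^2/B^4) * ((W*(1 - (cmod u)^2)/B^2)^n / ((W/B)^(2*n+2) * (c*d/B)^2))"
      using m1 by (simp add: F_def jac e1 e2 e3)
    also have "\<dots> = (1 - (cmod u)^2)^n / (W^n * c^2 * d^2)"
      by (rule alg[OF W0 B0 c0 d0])
    finally show ?thesis using True by (simp add: d_def field_simps)
  qed
  have "(\<integral>\<^sup>+z. ennreal (indicator (ball 0 1) z * ((1 - (cmod z)^2)^n / ((cmod (1 - z * cnj w))^(2*n+2) * (cmod (z - \<zeta>))^2))) \<partial>lborel)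
      = (\<integral>\<^sup>+z. ennreal (indicator (mob w ` ball 0 1) z * F z) \<partial>lborel)"
    by (intro nn_integral_cong) (auto simp: mob_image[OF w1] F_def indicator_def)
  also have "\<dots> = (\<integral>\<^sup>+u. ennreal (indicator (ball 0 1) u * (\<bar>jac ((*) (D u))\<bar> * F (mob w u))) \<partial>lborel)"
  proof (rule cv_nn_complex[OF _ _ mob_inj[OF w1] F0])
    show "ball 0 1 \<in> sets borel" by simp
    show "(mob w has_derivative (*) (D u)) (at u within ball 0 1)" if "u \<in> ball 0 1" for u
      using mob_deriv[OF w1, of u] that
      by (auto simp: D_def has_field_derivative_def intro: has_derivative_at_withinI)
    show "(\<lambda>x. indicator (mob w ` ball 0 1) x * F x) \<in> borel_measurable borel"
      unfolding mob_image[OF w1] using Fm by (intro borel_measurable_times borel_measurable_indicator) auto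
    show "(\<lambda>x. indicator (ball 0 1) x * (\<bar>jac ((*) (D x))\<bar> * F (mob w x))) \<in> borel_measurable borel"
      unfolding key
      by (intro borel_measurable_times borel_measurable_indicator borel_measurable_divide
        borel_measurable_continuous_onI continuous_intros) auto
  qed
  also have "\<dots> = (\<integral>\<^sup>+u. ennreal (1 / (W^n * c^2)) * ennreal (indicator (ball 0 1) u * ((1 - (cmod u)^2)^n / (cmod (u - \<eta>))^2)) \<partial>lborel)"
  proof (intro nn_integral_cong)
    fix u :: complex
    have "0 \<le> indicator (ball 0 1) u * ((1 - (cmod u)^2)^n / (cmod (u - \<eta>))^2)"
      by (auto simp: indicator_def power_le_one)
    then show "ennreal (indicator (ball 0 1) u * (\<bar>jac ((*) (D u))\<bar> * F (mob w u))) =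
        ennreal (1 / (W^n * c^2)) * ennreal (indicator (ball 0 1) u * ((1 - (cmod u)^2)^n / (cmod (u - \<eta>))^2))"
      unfolding key using W0 c0 by (simp add: ennreal_mult[symmetric] field_simps)
  qed
  also have "\<dots> = ennreal (1 / (W^n * c^2)) * (\<integral>\<^sup>+u. ennreal (indicator (ball 0 1) u * ((1 - (cmod u)^2)^n / (cmod (u - \<eta>))^2)) \<partial>lborel)"
    by (intro nn_integral_cmult)
       (intro borel_measurable_times borel_measurable_indicator borel_measurable_divide measurable_compose[OF _ measurable_ennreal]
        borel_measurable_continuous_onI continuous_intros, auto)
  also have "\<dots> = ennreal (1 / (W^n * c^2)) * ennreal (pi / n)"
    by (simp only: disc_poisson[OF eta1 n])
  also have "\<dots> = ennreal (pi / (n * (1 - (cmod w)^2)^n * (cmod (1 - \<zeta> * cnj w))^2))"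
    using W0 c0 by (simp add: ennreal_mult[symmetric] W_def c_def field_simps)
  finally show ?thesis .
qed

lemma alg_der0:
  fixes b a c p :: complex
  assumes "b \<noteq> 0" "p \<noteq> 0"
  shows "- (c * (m * p * (0 - a))) / ((p * b) * (p * b)) = c * (m * a) / (p * b * b)"
  using assms by (simp add: field_simps)
lemma alg_der:
  fixes b a c :: complex
  assumes "b \<noteq> 0"
  shows "- (c * (of_nat (k+1) * b^k * (0 - a))) / (b^(k+1) * b^(k+1)) = c * (of_nat (k+1) * a) / b^(k+2)"
proof -
  have "b^(k+1) = b^k * b" "b^(k+2) = b^k * b * b" by (simp_all add: power_add power2_eq_square)
  moreover have "b^k \<noteq> 0" using assms by simp
  ultimately show ?thesis using alg_der0[OF assms, of "b^k"] by simp
qed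

lemma deriv_step:
  fixes a z c :: complex
  assumes nz: "1 - z * a \<noteq> 0"
  shows "((\<lambda>z. c / (1 - z * a)^(k+1)) has_field_derivative c * (of_nat (k+1) * a) / (1 - z * a)^(k+2)) (at z)"
proof -
  have "((\<lambda>z. c / (1 - z * a)^(k+1)) has_field_derivative
       - (c * (of_nat (k+1) * (1 - z * a)^k * (0 - a))) / ((1 - z * a)^(k+1) * (1 - z * a)^(k+1))) (at z)"
    using nz by (intro derivative_eq_intros refl) auto
  then show ?thesis using alg_der[OF nz] by simp
qed

lemma deriv_kernel:
  fixes w :: complex
  shows "z * cnj w \<noteq> 1 \<Longrightarrow> (deriv ^^ k) (\<lambda>z. 1 / (1 - z * cnj w)) z = fact k * (cnj w)^k / (1 - z * cnj w)^(k+1)"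
proof (induction k arbitrary: z)
  case 0
  then show ?case by simp
next
  case (Suc k)
  define U where "U = {z. z * cnj w \<noteq> 1}"
  have oU: "open U" unfolding U_def
    by (intro open_Collect_neq continuous_intros)
  have nz: "1 - z * cnj w \<noteq> 0" using Suc.prems by simp
  have d: "((\<lambda>z. fact k * (cnj w)^k / (1 - z * cnj w)^(k+1)) has_field_derivative
           fact (Suc k) * (cnj w)^(Suc k) / (1 - z * cnj w)^(Suc k + 1)) (at z)"
    using deriv_step[OF nz, of "fact k * (cnj w)^k" k] by (simp add: algebra_simps)
  have "((deriv ^^ k) (\<lambda>z. 1 / (1 - z * cnj w)) has_field_derivative
           fact (Suc k) * (cnj w)^(Suc k) / (1 - z * cnj w)^(Suc k + 1)) (at z)"
    by (rule has_field_derivative_transform_within_open[OF d oU])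
       (use Suc in \<open>auto simp: U_def\<close>)
  then show ?case by (simp add: DERIV_imp_deriv)
qed

lemma ind_fst_meas: "(\<lambda>p::complex\<times>complex. indicator (ball 0 1) (fst p) :: real) \<in> borel_measurable borel"
proof -
  have "fst \<in> (borel :: (complex\<times>complex) measure) \<rightarrow>\<^sub>M borel"
    by (intro borel_measurable_continuous_onI continuous_on_fst continuous_on_id)
  moreover have "(indicator (ball (0::complex) 1) :: complex \<Rightarrow> real) \<in> borel_measurable borel"
    by (intro borel_measurable_indicator) simp
  ultimately show ?thesis using measurable_compose by (simp add: o_def)
qed

theorem lemma5p1:
  fixes \<mu> :: "complex measure" and n :: nat and w :: complex
  assumes "circle_measure \<mu>" and "n \<ge> 1" and "cmod w < 1"
  shows "D_mu_n \<mu> n (\<lambda>z. 1 / (1 - z * cnj w)) =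
         ennreal ((cmod w) ^ (2 * n) / (1 - (cmod w)\<^sup>2) ^ n * V_mu \<mu> w)"
proof -
  have sets_mu: "sets \<mu> = sets borel" and fin: "finite_measure \<mu>"
    and null: "emeasure \<mu> (UNIV - sphere 0 1) = 0"
    using assms(1) by (auto simp: circle_measure_def)
  have n: "n \<ge> 1" and w1: "cmod w < 1" using assms by auto
  interpret mu: finite_measure \<mu> by (rule fin)
  have sp: "space \<mu> = UNIV" using sets_eq_imp_space_eq[OF sets_mu] by simp
  have AEs: "AE \<zeta> in \<mu>. cmod \<zeta> = 1"
  proof (rule AE_I'[of "UNIV - sphere 0 1"])
    have "UNIV - sphere (0::complex) 1 \<in> sets borel" by (intro borel_open) (simp add: open_Diff)
    then show "UNIV - sphere 0 1 \<in> null_sets \<mu>" using null sets_mu by (simp add: null_sets_def)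
    show "{x \<in> space \<mu>. cmod x \<noteq> 1} \<subseteq> UNIV - sphere 0 1" by auto
  qed
  have mmu: "h \<in> borel_measurable \<mu>" if "h \<in> borel_measurable borel" for h :: "complex \<Rightarrow> real"
    using that measurable_cong_sets[OF sets_mu refl] by blast
  define W where "W = 1 - (cmod w)^2"
  have W0: "W > 0" using w1 by (simp add: W_def power_less_one_iff abs_square_less_1)
  define C0 where "C0 = (fact n)^2 * (cmod w)^(2*n)"
  have C00: "C0 \<ge> 0" by (simp add: C0_def)
  define K where "K z \<zeta> = C0 * (indicator (ball 0 1) z * ((1 - (cmod z)^2)^n / ((cmod (1 - z * cnj w))^(2*n+2) * (cmod (z - \<zeta>))^2)))" for z \<zeta>
  have K0: "0 \<le> K z \<zeta>" for z \<zeta>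
    using C00 by (auto simp: K_def indicator_def power_le_one)
  define f where "f = (\<lambda>z::complex. 1 / (1 - z * cnj w))"
  define g where "g z = ennreal ((cmod ((deriv ^^ n) f z))\<^sup>2 * poisson \<mu> z * (1 - (cmod z)\<^sup>2) ^ (n - 1))" for z
  have stepA: "g z = (\<integral>\<^sup>+\<zeta>. ennreal (K z \<zeta>) \<partial>\<mu>)" if z: "z \<in> ball 0 1" for z
  proof -
    have z1: "cmod z < 1" using z by simp
    have nz: "1 - z * cnj w \<noteq> 0" using one_minus_cnj_ne[of w z] w1 z1 by (simp add: mult.commute)
    define B where "B = cmod (1 - z * cnj w)"
    have B0: "B > 0" using nz by (simp add: B_def)
    have dn: "(deriv ^^ n) f z = fact n * (cnj w)^n / (1 - z * cnj w)^(n+1)"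
      unfolding f_def by (rule deriv_kernel) (use nz in simp)
    have A1: "cmod ((deriv ^^ n) f z) = fact n * cmod w ^ n / B^(n+1)"
      by (simp add: dn B_def norm_divide norm_mult norm_power)
    have p1: "(cmod w ^ n)^2 = cmod w ^ (2*n)" "(B^(n+1))^2 = B^(2*n+2)"
      by (simp_all only: power_mult[symmetric] mult.commute) (simp_all add: algebra_simps)
    have A: "(cmod ((deriv ^^ n) f z))^2 = C0 / B^(2*n+2)"
      unfolding A1 C0_def power_divide power_mult_distrib p1 ..
    define h where "h \<zeta> = (1 - (cmod z)^2) / (cmod (z - \<zeta>))^2" for \<zeta>
    have h0: "0 \<le> h \<zeta>" for \<zeta> using z1 by (simp add: h_def power_le_one abs_square_le_1)
    have hm: "h \<in> borel_measurable \<mu>"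
      unfolding h_def by (intro mmu borel_measurable_divide borel_measurable_continuous_onI continuous_intros)
    have hb: "AE \<zeta> in \<mu>. norm (h \<zeta>) \<le> (1 - (cmod z)^2) / (1 - cmod z)^2"
      using AEs
    proof eventually_elim
      case (elim \<zeta>)
      have "1 - cmod z \<le> cmod (z - \<zeta>)"
        using norm_triangle_ineq2[of \<zeta> z] elim by (simp add: norm_minus_commute)
      moreover have "0 < 1 - cmod z" using z1 by simp
      ultimately have "(1 - cmod z)^2 \<le> (cmod (z - \<zeta>))^2" by (intro power_mono) auto
      then show ?case using h0[of \<zeta>] \<open>0 < 1 - cmod z\<close>
        by (auto simp: h_def intro!: divide_left_mono mult_pos_pos simp: abs_square_le_1 power_le_one)
    qed
    have hint: "integrable \<mu> h" by (rule mu.integrable_const_bound[OF hb hm])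
    have P: "ennreal (poisson \<mu> z) = (\<integral>\<^sup>+\<zeta>. ennreal (h \<zeta>) \<partial>\<mu>)"
      unfolding poisson_def h_def[symmetric]
      by (rule nn_integral_eq_integral[symmetric]) (use hint h0 in auto)
    have R0: "0 \<le> (1 - (cmod z)^2)^(n-1)" using z1 by (simp add: power_le_one abs_square_le_1)
    have P0: "0 \<le> poisson \<mu> z"
      unfolding poisson_def h_def[symmetric] by (rule integral_nonneg_AE) (simp add: h0)
    have "g z = ennreal ((C0 / B^(2*n+2) * (1 - (cmod z)^2)^(n-1)) * poisson \<mu> z)"
      unfolding g_def A by (simp add: mult_ac)
    also have "\<dots> = ennreal (C0 / B^(2*n+2) * (1 - (cmod z)^2)^(n-1)) * ennreal (poisson \<mu> z)"
      using C00 B0 R0 P0 by (intro ennreal_mult) auto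
    also have "\<dots> = (\<integral>\<^sup>+\<zeta>. ennreal (C0 / B^(2*n+2) * (1 - (cmod z)^2)^(n-1)) * ennreal (h \<zeta>) \<partial>\<mu>)"
      unfolding P using hm by (intro nn_integral_cmult[symmetric]) auto
    also have "\<dots> = (\<integral>\<^sup>+\<zeta>. ennreal (K z \<zeta>) \<partial>\<mu>)"
    proof (intro nn_integral_cong)
      fix \<zeta>
      have "C0 / B^(2*n+2) * (1 - (cmod z)^2)^(n-1) * h \<zeta> = K z \<zeta>"
        using z n by (simp add: K_def h_def B_def field_simps power_minus_mult[symmetric, of n "1 - (cmod z)^2"])
      then show "ennreal (C0 / B^(2*n+2) * (1 - (cmod z)^2)^(n-1)) * ennreal (h \<zeta>) = ennreal (K z \<zeta>)"
        using C00 B0 R0 h0[of \<zeta>] by (simp add: ennreal_mult[symmetric])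
    qed
    finally show ?thesis .
  qed
  define G where "G z = (\<integral>\<^sup>+\<zeta>. ennreal (K z \<zeta>) \<partial>\<mu>)" for z
  have sets_prod: "sets (lborel \<Otimes>\<^sub>M \<mu>) = sets (borel :: (complex \<times> complex) measure)"
  proof -
    have "sets (lborel \<Otimes>\<^sub>M \<mu>) = sets ((borel :: complex measure) \<Otimes>\<^sub>M (borel :: complex measure))"
      by (rule sets_pair_measure_cong) (simp_all add: sets_mu)
    then show ?thesis using borel_prod[where 'a=complex and 'b=complex] by metis
  qed
  have Kb: "(\<lambda>p. K (fst p) (snd p)) \<in> borel_measurable (borel :: (complex \<times> complex) measure)"
    unfolding K_def
    by (intro borel_measurable_times ind_fst_meas borel_measurable_divide borel_measurable_const
        borel_measurable_continuous_onI continuous_intros)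
  have Km: "case_prod (\<lambda>z \<zeta>. ennreal (K z \<zeta>)) \<in> borel_measurable (lborel \<Otimes>\<^sub>M \<mu>)"
  proof -
    have "(\<lambda>p. ennreal (K (fst p) (snd p))) \<in> borel_measurable (borel :: (complex \<times> complex) measure)"
      using measurable_compose[OF Kb measurable_ennreal] by (simp add: o_def)
    then have "(\<lambda>p. ennreal (K (fst p) (snd p))) \<in> borel_measurable (lborel \<Otimes>\<^sub>M \<mu>)"
      using measurable_cong_sets[OF sets_prod refl] by blast
    then show ?thesis by (simp add: case_prod_unfold)
  qed
  have Gm: "G \<in> borel_measurable lborel"
    unfolding G_def by (rule mu.borel_measurable_nn_integral[OF Km])
  have G_out: "G z = 0" if "z \<notin> ball 0 1" for z
    using that by (simp add: G_def K_def)
  have dA_int: "(\<integral>\<^sup>+z. g z \<partial>dA) = ennreal (1/pi) * (\<integral>\<^sup>+z. G z \<partial>lborel)"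
  proof -
    have "(\<integral>\<^sup>+z. g z \<partial>dA) = (\<integral>\<^sup>+z. G z \<partial>dA)"
      by (rule nn_integral_cong) (simp add: dA_def space_restrict_space stepA G_def)
    also have "\<dots> = (\<integral>\<^sup>+z. ennreal (1/pi) * G z \<partial>restrict_space lborel (ball 0 1))"
      unfolding dA_def by (rule nn_integral_density) (auto intro: measurable_restrict_space1 Gm)
    also have "\<dots> = (\<integral>\<^sup>+z. ennreal (1/pi) * G z * indicator (ball 0 1) z \<partial>lborel)"
      by (rule nn_integral_restrict_space) simp
    also have "\<dots> = (\<integral>\<^sup>+z. ennreal (1/pi) * G z \<partial>lborel)"
      by (intro nn_integral_cong) (auto simp: indicator_def G_out)
    also have "\<dots> = ennreal (1/pi) * (\<integral>\<^sup>+z. G z \<partial>lborel)"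
      by (rule nn_integral_cmult) (rule Gm)
    finally show ?thesis .
  qed
  interpret P: pair_sigma_finite lborel \<mu>
    by (intro pair_sigma_finite.intro lborel.sigma_finite_measure_axioms mu.sigma_finite_measure_axioms)
  have fub: "(\<integral>\<^sup>+z. G z \<partial>lborel) = (\<integral>\<^sup>+\<zeta>. \<integral>\<^sup>+z. ennreal (K z \<zeta>) \<partial>lborel \<partial>\<mu>)"
    unfolding G_def by (rule P.Fubini'[symmetric]) (rule Km)
  define E where "E = C0 * pi / (n * W^n)"
  have E0: "E \<ge> 0" using C00 W0 by (simp add: E_def)
  define v where "v \<zeta> = 1 / (cmod (1 - \<zeta> * cnj w))^2" for \<zeta>
  have v0: "0 \<le> v \<zeta>" for \<zeta> by (simp add: v_def)
  have inner: "AE \<zeta> in \<mu>. (\<integral>\<^sup>+z. ennreal (K z \<zeta>) \<partial>lborel) = ennreal E * ennreal (v \<zeta>)"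
    using AEs
  proof eventually_elim
    case (elim \<zeta>)
    have "(\<integral>\<^sup>+z. ennreal (K z \<zeta>) \<partial>lborel) = (\<integral>\<^sup>+z. ennreal C0 * ennreal (indicator (ball 0 1) z * ((1 - (cmod z)^2)^n / ((cmod (1 - z * cnj w))^(2*n+2) * (cmod (z - \<zeta>))^2))) \<partial>lborel)"
    proof (intro nn_integral_cong)
      fix z :: complex
      have "0 \<le> indicator (ball 0 1) z * ((1 - (cmod z)^2)^n / ((cmod (1 - z * cnj w))^(2*n+2) * (cmod (z - \<zeta>))^2))"
        by (auto simp: indicator_def power_le_one)
      then show "ennreal (K z \<zeta>) = ennreal C0 * ennreal (indicator (ball 0 1) z * ((1 - (cmod z)^2)^n / ((cmod (1 - z * cnj w))^(2*n+2) * (cmod (z - \<zeta>))^2)))"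
        unfolding K_def by (rule ennreal_mult[OF C00])
    qed
    also have "\<dots> = ennreal C0 * (\<integral>\<^sup>+z. ennreal (indicator (ball 0 1) z * ((1 - (cmod z)^2)^n / ((cmod (1 - z * cnj w))^(2*n+2) * (cmod (z - \<zeta>))^2))) \<partial>lborel)"
      by (intro nn_integral_cmult measurable_compose[OF _ measurable_ennreal] borel_measurable_times
          borel_measurable_indicator borel_measurable_divide borel_measurable_continuous_onI continuous_intros) auto
    also have "\<dots> = ennreal C0 * ennreal (pi / (n * (1 - (cmod w)^2)^n * (cmod (1 - \<zeta> * cnj w))^2))"
      by (simp only: core[OF elim w1 n])
    also have "\<dots> = ennreal E * ennreal (v \<zeta>)"
      using C00 W0 by (simp add: E_def v_def W_def ennreal_mult[symmetric] field_simps)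
    finally show ?case .
  qed
  have vm: "v \<in> borel_measurable \<mu>"
    unfolding v_def by (intro mmu borel_measurable_divide borel_measurable_const
        borel_measurable_continuous_onI continuous_intros)
  have vb: "AE \<zeta> in \<mu>. norm (v \<zeta>) \<le> 1 / (1 - cmod w)^2"
    using AEs
  proof eventually_elim
    case (elim \<zeta>)
    have "1 - cmod w \<le> cmod (1 - \<zeta> * cnj w)"
      using norm_triangle_ineq2[of 1 "\<zeta> * cnj w"] elim by (simp add: norm_mult)
    moreover have "0 < 1 - cmod w" using w1 by simp
    ultimately have "(1 - cmod w)^2 \<le> (cmod (1 - \<zeta> * cnj w))^2" by (intro power_mono) auto
    then show ?case using \<open>0 < 1 - cmod w\<close>
      by (simp add: v_def divide_simps)
  qed
  have vint: "integrable \<mu> v" by (rule mu.integrable_const_bound[OF vb vm])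
  have Vnn: "(\<integral>\<^sup>+\<zeta>. ennreal (v \<zeta>) \<partial>\<mu>) = ennreal (V_mu \<mu> w)"
    unfolding V_mu_def v_def[symmetric]
    by (rule nn_integral_eq_integral) (use vint v0 in auto)
  have V0: "0 \<le> V_mu \<mu> w"
    unfolding V_mu_def v_def[symmetric] by (rule integral_nonneg_AE) (simp add: v0)
  have "(\<integral>\<^sup>+\<zeta>. \<integral>\<^sup>+z. ennreal (K z \<zeta>) \<partial>lborel \<partial>\<mu>) = (\<integral>\<^sup>+\<zeta>. ennreal E * ennreal (v \<zeta>) \<partial>\<mu>)"
    by (rule nn_integral_cong_AE[OF inner])
  also have "\<dots> = ennreal E * (\<integral>\<^sup>+\<zeta>. ennreal (v \<zeta>) \<partial>\<mu>)"
    using vm by (intro nn_integral_cmult) auto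
  also have "\<dots> = ennreal E * ennreal (V_mu \<mu> w)" by (simp only: Vnn)
  finally have outer: "(\<integral>\<^sup>+\<zeta>. \<integral>\<^sup>+z. ennreal (K z \<zeta>) \<partial>lborel \<partial>\<mu>) = ennreal E * ennreal (V_mu \<mu> w)" .
  have "D_mu_n \<mu> n (\<lambda>z. 1 / (1 - z * cnj w)) = ennreal (1 / (fact n * fact (n - 1))) * (\<integral>\<^sup>+z. g z \<partial>dA)"
    by (simp add: D_mu_n_def g_def f_def)
  also have "\<dots> = ennreal (1 / (fact n * fact (n - 1))) * (ennreal (1/pi) * (ennreal E * ennreal (V_mu \<mu> w)))"
    by (simp only: dA_int fub outer)
  also have "\<dots> = ennreal (1 / (fact n * fact (n - 1)) * (1/pi) * E * V_mu \<mu> w)"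
  proof -
    have a0: "0 \<le> 1 / (fact n * fact (n - 1) :: real)" by simp
    have b0: "0 \<le> 1 / pi" by simp
    show ?thesis
      by (simp only: ennreal_mult[symmetric] mult_nonneg_nonneg a0 b0 E0 V0 mult.assoc)
  qed
  also have "1 / (fact n * fact (n - 1)) * (1/pi) * E * V_mu \<mu> w = (cmod w) ^ (2 * n) / (1 - (cmod w)\<^sup>2) ^ n * V_mu \<mu> w"
  proof -
    have fn: "(fact n :: real) = real n * fact (n - 1)" using n by (simp add: fact_reduce)
    have "fact (n - 1) > (0::real)" by simp
    then show ?thesis using n W0
      by (simp add: E_def C0_def W_def fn power2_eq_square field_simps)
  qed
  finally show ?thesis .
qed

end
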